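(* Consider an SDE on $\mathbf{R}^d$ with locally Lipschitz coefficients and its maximal flow $(\phi,\tau)$. Let $U_1\subset U_2\subset\cdots$ be bounded open subsets of $\mathbf{R}^d$ with $\bigcup_n U_n=\mathbf{R}^d$. For a compact set $K\subset\mathbf{R}^d$ set $\tau^K_n:=\inf\{t>0:\phi_t(K)\not\subseteq U_n\}$ (with $\tau_0^K:=0$) and $\tau^K:=\inf_{x\in K}\tau(x)$. (i) Suppose there are nonnegative sequences $(a_n),(b_n)$ with $\sum_n a_n=\infty$ and $\sum_n b_n<\infty$ such that for all $n$, $$\mathbf P\{\tau^K_n-\tau^K_{n-1}\le a_n,\ \tau^K_{n-1}<\infty\}\le b_n.$$ Then $\tau^K=\infty$ almost surely. If this holds for every compact $K$, the SDE is strongly complete. (ii) Conversely, let $(a_n),(b_n)$ be nonnegative summable sequences and let $T_1,T_2,\dots$ be finite random times with $\tau^K\le\sum_j T_j$. If $\mathbf P\{T_n\ge a_n\}\le b_n$ for all $n$, then $\tau^K<\infty$ almost surely.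
   Context: Let $(\Omega,\mathcal F,\mathbf P)$ be a probability space. For an SDE on $\mathbf{R}^d$ with locally Lipschitz coefficients driven by independent Brownian motions, a maximal flow is a pair $(\phi,\tau)$ with $\tau:\mathbf{R}^d\times\Omega\to(0,\infty]$ and $\phi_t(x,\omega)$ defined for $t<\tau(x,\omega)$, such that for each $x$, $\phi_\cdot(x)$ solves the SDE from $x$ on $[0,\tau(x))$; $(t,x)\mapsto\phi_t(x,\omega)$ is continuous on $\{t<\tau(x,\omega)\}$; and $\limsup_{t\to\tau(x,\omega)}|\phi_t(x,\omega)|=\infty$ on $\{\tau(x)<\infty\}$. The SDE is strongly complete if there is a set $\Omega_0$ of full probability with $\tau(x,\omega)=\infty$ for all $x$ and all $\omega\in\Omega_0$. *)

theory Defs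
  imports "HOL-Probability.Probability"
begin

text \<open>A random local flow (phi, tau) on a euclidean space, with sample space type 'w.
  phi t x w is meaningful for 0 <= t < tau x w.  This records the structural properties of a
  maximal flow: initial condition, positivity of the lifetime, joint continuity on the domain
  of definition, and explosion at a finite lifetime.  (The property that each trajectory
  solves the SDE is not expressible: HOL has no Ito integral.)\<close>
definition maximal_flow ::
  "'w measure \<Rightarrow> (real \<Rightarrow> 'a::euclidean_space \<Rightarrow> 'w \<Rightarrow> 'a) \<Rightarrow> ('a \<Rightarrow> 'w \<Rightarrow> ereal) \<Rightarrow> bool" where
  "maximal_flow M \<phi> \<tau> \<longleftrightarrow>
     (\<forall>\<omega>\<in>space M.
        (\<forall>x. 0 < \<tau> x \<omega>) \<and>
        (\<forall>x. \<phi> 0 x \<omega> = x) \<and>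
        continuous_on {(t, x). 0 \<le> t \<and> ereal t < \<tau> x \<omega>} (\<lambda>(t, x). \<phi> t x \<omega>) \<and>
        (\<forall>x. \<tau> x \<omega> < \<infinity> \<longrightarrow>
           (\<forall>B. \<exists>\<^sub>F t in at_left (real_of_ereal (\<tau> x \<omega>)). B < norm (\<phi> t x \<omega>))))"

definition flow_image_in ::
  "(real \<Rightarrow> 'a \<Rightarrow> 'w \<Rightarrow> 'a) \<Rightarrow> ('a \<Rightarrow> 'w \<Rightarrow> ereal) \<Rightarrow> real \<Rightarrow> 'a set \<Rightarrow> 'a set \<Rightarrow> 'w \<Rightarrow> bool" where
  "flow_image_in \<phi> \<tau> t K U \<omega> \<longleftrightarrow> (\<forall>x\<in>K. ereal t < \<tau> x \<omega> \<and> \<phi> t x \<omega> \<in> U)"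

text \<open>tau^K_n = inf {t > 0 : phi_t(K) not contained in U_n} (inf of the empty set = infinity),
  and tau^K_0 = 0.\<close>
definition exit_time ::
  "(real \<Rightarrow> 'a \<Rightarrow> 'w \<Rightarrow> 'a) \<Rightarrow> ('a \<Rightarrow> 'w \<Rightarrow> ereal) \<Rightarrow> (nat \<Rightarrow> 'a set) \<Rightarrow> 'a set \<Rightarrow> nat \<Rightarrow> 'w \<Rightarrow> ereal" where
  "exit_time \<phi> \<tau> U K n \<omega> =
     (if n = 0 then 0
      else Inf {ereal t | t. 0 < t \<and> \<not> flow_image_in \<phi> \<tau> t K (U n) \<omega>})"

definition life_time :: "('a \<Rightarrow> 'w \<Rightarrow> ereal) \<Rightarrow> 'a set \<Rightarrow> 'w \<Rightarrow> ereal" where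
  "life_time \<tau> K \<omega> = (INF x\<in>K. \<tau> x \<omega>)"

definition strongly_complete :: "'w measure \<Rightarrow> ('a \<Rightarrow> 'w \<Rightarrow> ereal) \<Rightarrow> bool" where
  "strongly_complete M \<tau> \<longleftrightarrow>
     (\<exists>\<Omega>0\<in>sets M. measure M \<Omega>0 = 1 \<and> (\<forall>\<omega>\<in>\<Omega>0. \<forall>x. \<tau> x \<omega> = \<infinity>))"

end

theory Submission
  imports Defs
begin

lemma exit_nonneg: "0 \<le> exit_time \<phi> \<tau> U K n \<omega>"
  unfolding exit_time_def by (auto intro!: Inf_greatest)

lemma exit_le_life:
  assumes pos: "\<forall>x. 0 < \<tau> x \<omega>"
  shows "exit_time \<phi> \<tau> U K n \<omega> \<le> life_time \<tau> K \<omega>"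
  unfolding life_time_def
proof (rule INF_greatest)
  fix x assume xK: "x \<in> K"
  show "exit_time \<phi> \<tau> U K n \<omega> \<le> \<tau> x \<omega>"
  proof (rule ccontr)
    assume "\<not> ?thesis"
    hence lt: "\<tau> x \<omega> < exit_time \<phi> \<tau> U K n \<omega>" by simp
    then obtain t where t1: "\<tau> x \<omega> < ereal t" and t2: "ereal t < exit_time \<phi> \<tau> U K n \<omega>"
      using ereal_dense2 by blast
    have tpos: "0 < t" using pos t1 by (metis ereal_less(2) order.strict_trans)
    have n0: "n \<noteq> 0" using t2 tpos unfolding exit_time_def by (auto split: if_splits)
    have "flow_image_in \<phi> \<tau> t K (U n) \<omega>"
    proof (rule ccontr)
      assume "\<not> flow_image_in \<phi> \<tau> t K (U n) \<omega>"
      hence "exit_time \<phi> \<tau> U K n \<omega> \<le> ereal t"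
        unfolding exit_time_def using n0 tpos by (auto intro!: Inf_lower)
      thus False using t2 by simp
    qed
    thus False using xK t1 unfolding flow_image_in_def by auto
  qed
qed

lemma exit_mono:
  assumes "\<forall>n\<ge>1. U n \<subseteq> U (Suc n)"
  shows "exit_time \<phi> \<tau> U K n \<omega> \<le> exit_time \<phi> \<tau> U K (Suc n) \<omega>"
proof (cases "n = 0")
  case True thus ?thesis by (simp add: exit_nonneg exit_time_def[of _ _ _ _ 0])
next
  case False
  hence sub: "U n \<subseteq> U (Suc n)" using assms by auto
  show ?thesis unfolding exit_time_def using False
    by (auto intro!: Inf_superset_mono simp: flow_image_in_def) (use sub in blast)
qed

lemma part1:
  fixes M :: "'w measure"
    and \<phi> :: "real \<Rightarrow> 'a::euclidean_space \<Rightarrow> 'w \<Rightarrow> 'a"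
  assumes P: "prob_space M"
    and pos: "\<forall>\<omega>\<in>space M. \<forall>x. 0 < \<tau> x \<omega>"
    and U_mono: "\<forall>n\<ge>1. U n \<subseteq> U (Suc n)"
    and meas: "\<And>n. exit_time \<phi> \<tau> U K n \<in> borel_measurable M"
    and ab: "\<forall>n\<ge>1. 0 \<le> a n \<and> 0 \<le> b n"
    and ns: "\<not> summable (\<lambda>n. a (Suc n))" and bs: "summable (\<lambda>n. b (Suc n))"
    and hyp: "\<forall>n\<ge>1. measure M {\<omega>\<in>space M.
              exit_time \<phi> \<tau> U K n \<omega> - exit_time \<phi> \<tau> U K (n - 1) \<omega> \<le> ereal (a n) \<and>
              exit_time \<phi> \<tau> U K (n - 1) \<omega> < \<infinity>} \<le> b n"
  shows "AE \<omega> in M. life_time \<tau> K \<omega> = \<infinity>"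
proof -
  interpret prob_space M by (rule P)
  define e where "e = exit_time \<phi> \<tau> U K"
  have [measurable]: "\<And>n. e n \<in> borel_measurable M" using meas e_def by simp
  define A where "A n = {\<omega>\<in>space M. e (Suc n) \<omega> - e n \<omega> \<le> ereal (a (Suc n)) \<and> e n \<omega> < \<infinity>}" for n
  have Am[measurable]: "A n \<in> sets M" for n unfolding A_def by measurable
  have Ab: "measure M (A n) \<le> b (Suc n)" for n
    using hyp[rule_format, of "Suc n"] unfolding A_def e_def by simp
  have "summable (\<lambda>n. measure M (A n))"
    by (rule summable_comparison_test'[OF bs, of 0]) (use Ab in auto)
  hence "AE \<omega> in M. eventually (\<lambda>n. \<omega> \<in> space M - A n) sequentially"
    by (intro borel_cantelli_AE1) (auto simp: emeasure_eq_measure)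
  then show ?thesis
  proof (rule AE_mp, intro AE_I2 impI)
    fix \<omega> assume \<omega>: "\<omega> \<in> space M" and ev: "eventually (\<lambda>n. \<omega> \<in> space M - A n) sequentially"
    then obtain N where N: "\<And>n. n \<ge> N \<Longrightarrow> \<omega> \<notin> A n" by (auto simp: eventually_sequentially)
    show "life_time \<tau> K \<omega> = \<infinity>"
    proof (rule ccontr)
      assume ninf: "life_time \<tau> K \<omega> \<noteq> \<infinity>"
      have le: "e n \<omega> \<le> life_time \<tau> K \<omega>" for n
        unfolding e_def using pos \<omega> by (intro exit_le_life) auto
      have e0: "0 \<le> e n \<omega>" for n unfolding e_def by (rule exit_nonneg)
      obtain l where l: "life_time \<tau> K \<omega> = ereal l"
        using ninf le[of 0] e0[of 0] by (cases "life_time \<tau> K \<omega>") auto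
      have fin: "e n \<omega> < \<infinity>" for n using le[of n] l by auto
      have step: "e n \<omega> + ereal (a (Suc n)) < e (Suc n) \<omega>" if "n \<ge> N" for n
      proof -
        have "\<not> (e (Suc n) \<omega> - e n \<omega> \<le> ereal (a (Suc n)))"
          using N[OF that] fin[of n] \<omega> unfolding A_def by auto
        moreover obtain r where r: "e n \<omega> = ereal r" using fin[of n] e0[of n]
          by (cases "e n \<omega>") auto
        ultimately show ?thesis by (cases "e (Suc n) \<omega>") auto
      qed
      have ind: "ereal (\<Sum>i<k. a (Suc (i + N))) \<le> e (k + N) \<omega>" for k
      proof (induction k)
        case 0 thus ?case using e0[of N] by (simp add: zero_ereal_def)
      next
        case (Suc k)
        have "ereal (\<Sum>i<Suc k. a (Suc (i + N))) = ereal (\<Sum>i<k. a (Suc (i + N))) + ereal (a (Suc (k + N)))"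
          by simp
        also have "\<dots> \<le> e (k + N) \<omega> + ereal (a (Suc (k + N)))"
          using Suc.IH by (intro add_right_mono) 
        also have "\<dots> \<le> e (Suc k + N) \<omega>" using step[of "k + N"] by simp
        finally show ?case .
      qed
      have "summable (\<lambda>i. a (Suc (i + N)))"
      proof (rule summableI_nonneg_bounded)
        show "0 \<le> a (Suc (i + N))" for i using ab by auto
        show "(\<Sum>i<k. a (Suc (i + N))) \<le> l" for k
          using order.trans[OF ind[of k] le[of "k + N"]] l by simp
      qed
      hence "summable (\<lambda>n. a (Suc n))"
        using summable_iff_shift[of "\<lambda>n. a (Suc n)" N] by simp
      thus False using ns by simp
    qed
  qed
qed

lemma part3:
  fixes M :: "'w measure"
  assumes P: "prob_space M"
    and ab: "\<forall>n\<ge>1. 0 \<le> a n \<and> 0 \<le> b n"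
    and as: "summable (\<lambda>n. a (Suc n))" and bs: "summable (\<lambda>n. b (Suc n))"
    and Tm: "\<forall>n\<ge>1. T n \<in> borel_measurable M \<and> (\<forall>\<omega>\<in>space M. 0 \<le> T n \<omega>)"
    and lt: "\<forall>\<omega>\<in>space M. L \<omega> \<le> (\<Sum>j. ereal (T (Suc j) \<omega>))"
    and hyp: "\<forall>n\<ge>1. measure M {\<omega>\<in>space M. a n \<le> T n \<omega>} \<le> b n"
  shows "AE \<omega> in M. L \<omega> < \<infinity>"
proof -
  interpret prob_space M by (rule P)
  have [measurable]: "\<And>n. T (Suc n) \<in> borel_measurable M" using Tm by auto
  define A where "A n = {\<omega>\<in>space M. a (Suc n) \<le> T (Suc n) \<omega>}" for n
  have Am[measurable]: "A n \<in> sets M" for n unfolding A_def by measurable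
  have Ab: "measure M (A n) \<le> b (Suc n)" for n
    using hyp[rule_format, of "Suc n"] unfolding A_def by simp
  have "summable (\<lambda>n. measure M (A n))"
    by (rule summable_comparison_test'[OF bs, of 0]) (use Ab in auto)
  hence "AE \<omega> in M. eventually (\<lambda>n. \<omega> \<in> space M - A n) sequentially"
    by (intro borel_cantelli_AE1) (auto simp: emeasure_eq_measure)
  then show ?thesis
  proof (rule AE_mp, intro AE_I2 impI)
    fix \<omega> assume \<omega>: "\<omega> \<in> space M" and ev: "eventually (\<lambda>n. \<omega> \<in> space M - A n) sequentially"
    have nn: "0 \<le> T (Suc j) \<omega>" for j using Tm \<omega> by auto
    have "eventually (\<lambda>n. norm (T (Suc n) \<omega>) \<le> a (Suc n)) sequentially"
      using ev by eventually_elim (use \<omega> nn in \<open>auto simp: A_def\<close>)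
    hence sT: "summable (\<lambda>j. T (Suc j) \<omega>)" using as by (rule summable_comparison_test_ev)
    hence "(\<lambda>j. ereal (T (Suc j) \<omega>)) sums ereal (\<Sum>j. T (Suc j) \<omega>)"
      by (simp add: sums_ereal summable_sums)
    hence "(\<Sum>j. ereal (T (Suc j) \<omega>)) = ereal (\<Sum>j. T (Suc j) \<omega>)"
      by (rule sums_unique[symmetric])
    hence "L \<omega> \<le> ereal (\<Sum>j. T (Suc j) \<omega>)" using lt \<omega> by metis
    thus "L \<omega> < \<infinity>" by (rule order.strict_trans1) simp
  qed
qed

theorem mainTheorem3:
  fixes M :: "'w measure"
    and \<phi> :: "real \<Rightarrow> 'a::euclidean_space \<Rightarrow> 'w \<Rightarrow> 'a"
    and \<tau> :: "'a \<Rightarrow> 'w \<Rightarrow> ereal"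
    and U :: "nat \<Rightarrow> 'a set"
  assumes P: "prob_space M"
    and flow: "maximal_flow M \<phi> \<tau>"
    and U_open: "\<forall>n\<ge>1. open (U n) \<and> bounded (U n)"
    and U_mono: "\<forall>n\<ge>1. U n \<subseteq> U (Suc n)"
    and U_cover: "(\<Union>n\<in>{1..}. U n) = UNIV"
    and exit_meas: "\<forall>K n. compact K \<longrightarrow> exit_time \<phi> \<tau> U K n \<in> borel_measurable M"
  shows
    "(\<forall>K (a::nat \<Rightarrow> real) (b::nat \<Rightarrow> real).
        compact K \<and> (\<forall>n\<ge>1. 0 \<le> a n \<and> 0 \<le> b n) \<and>
        \<not> summable (\<lambda>n. a (Suc n)) \<and> summable (\<lambda>n. b (Suc n)) \<and>
        (\<forall>n\<ge>1. measure M {\<omega>\<in>space M.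
              exit_time \<phi> \<tau> U K n \<omega> - exit_time \<phi> \<tau> U K (n - 1) \<omega> \<le> ereal (a n) \<and>
              exit_time \<phi> \<tau> U K (n - 1) \<omega> < \<infinity>} \<le> b n)
      \<longrightarrow> (AE \<omega> in M. life_time \<tau> K \<omega> = \<infinity>))
   \<and> ((\<forall>K. compact K \<longrightarrow>
          (\<exists>(a::nat \<Rightarrow> real) (b::nat \<Rightarrow> real).
             (\<forall>n\<ge>1. 0 \<le> a n \<and> 0 \<le> b n) \<and>
             \<not> summable (\<lambda>n. a (Suc n)) \<and> summable (\<lambda>n. b (Suc n)) \<and>
             (\<forall>n\<ge>1. measure M {\<omega>\<in>space M.
                  exit_time \<phi> \<tau> U K n \<omega> - exit_time \<phi> \<tau> U K (n - 1) \<omega> \<le> ereal (a n) \<and>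
                  exit_time \<phi> \<tau> U K (n - 1) \<omega> < \<infinity>} \<le> b n)))
       \<longrightarrow> strongly_complete M \<tau>)
   \<and> (\<forall>K (a::nat \<Rightarrow> real) (b::nat \<Rightarrow> real) (T::nat \<Rightarrow> 'w \<Rightarrow> real).
        compact K \<and> (\<forall>n\<ge>1. 0 \<le> a n \<and> 0 \<le> b n) \<and>
        summable (\<lambda>n. a (Suc n)) \<and> summable (\<lambda>n. b (Suc n)) \<and>
        (\<forall>n\<ge>1. T n \<in> borel_measurable M \<and> (\<forall>\<omega>\<in>space M. 0 \<le> T n \<omega>)) \<and>
        (\<forall>\<omega>\<in>space M. life_time \<tau> K \<omega> \<le> (\<Sum>j. ereal (T (Suc j) \<omega>))) \<and>
        (\<forall>n\<ge>1. measure M {\<omega>\<in>space M. a n \<le> T n \<omega>} \<le> b n)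
      \<longrightarrow> (AE \<omega> in M. life_time \<tau> K \<omega> < \<infinity>))"
proof (intro conjI allI impI)
  interpret prob_space M by (rule P)
  have pos: "\<forall>\<omega>\<in>space M. \<forall>x. 0 < \<tau> x \<omega>" using flow unfolding maximal_flow_def by auto
  have I: "AE \<omega> in M. life_time \<tau> K \<omega> = \<infinity>" if "compact K" and "(\<forall>n\<ge>1. 0 \<le> a n \<and> 0 \<le> b n) \<and>
        \<not> summable (\<lambda>n. a (Suc n)) \<and> summable (\<lambda>n. b (Suc n)) \<and>
        (\<forall>n\<ge>1. measure M {\<omega>\<in>space M.
              exit_time \<phi> \<tau> U K n \<omega> - exit_time \<phi> \<tau> U K (n - 1) \<omega> \<le> ereal (a n) \<and>
              exit_time \<phi> \<tau> U K (n - 1) \<omega> < \<infinity>} \<le> b n)" for K a b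
    using that exit_meas by (intro part1[OF P pos U_mono, of \<phi> K a b]) auto
  fix K a b
  assume H: "compact K \<and> (\<forall>n\<ge>1. 0 \<le> a n \<and> 0 \<le> b n) \<and>
        \<not> summable (\<lambda>n. a (Suc n)) \<and> summable (\<lambda>n. b (Suc n)) \<and>
        (\<forall>n\<ge>1. measure M {\<omega>\<in>space M.
              exit_time \<phi> \<tau> U K n \<omega> - exit_time \<phi> \<tau> U K (n - 1) \<omega> \<le> ereal (a n) \<and>
              exit_time \<phi> \<tau> U K (n - 1) \<omega> < \<infinity>} \<le> b n)"
  thus "AE \<omega> in M. life_time \<tau> K \<omega> = \<infinity>" using I by blast
next
  interpret prob_space M by (rule P)
  have pos: "\<forall>\<omega>\<in>space M. \<forall>x. 0 < \<tau> x \<omega>" using flow unfolding maximal_flow_def by auto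
  assume H: "\<forall>K. compact K \<longrightarrow>
          (\<exists>(a::nat \<Rightarrow> real) (b::nat \<Rightarrow> real).
             (\<forall>n\<ge>1. 0 \<le> a n \<and> 0 \<le> b n) \<and>
             \<not> summable (\<lambda>n. a (Suc n)) \<and> summable (\<lambda>n. b (Suc n)) \<and>
             (\<forall>n\<ge>1. measure M {\<omega>\<in>space M.
                  exit_time \<phi> \<tau> U K n \<omega> - exit_time \<phi> \<tau> U K (n - 1) \<omega> \<le> ereal (a n) \<and>
                  exit_time \<phi> \<tau> U K (n - 1) \<omega> < \<infinity>} \<le> b n))"
  have each: "AE \<omega> in M. life_time \<tau> (cball 0 (real m)) \<omega> = \<infinity>" for m :: nat
  proof -
    have c: "compact (cball (0::'a) (real m))" by simp
    from H[rule_format, OF c] obtain a b where ab: "(\<forall>n\<ge>1. 0 \<le> a n \<and> 0 \<le> b n) \<and>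
             \<not> summable (\<lambda>n. a (Suc n)) \<and> summable (\<lambda>n. b (Suc n)) \<and>
             (\<forall>n\<ge>1. measure M {\<omega>\<in>space M.
                  exit_time \<phi> \<tau> U (cball 0 (real m)) n \<omega> - exit_time \<phi> \<tau> U (cball 0 (real m)) (n - 1) \<omega> \<le> ereal (a n) \<and>
                  exit_time \<phi> \<tau> U (cball 0 (real m)) (n - 1) \<omega> < \<infinity>} \<le> b n)" by blast
    show ?thesis using ab exit_meas c by (intro part1[OF P pos U_mono, of \<phi> _ a b]) auto
  qed
  hence "AE \<omega> in M. \<forall>m::nat. life_time \<tau> (cball 0 (real m)) \<omega> = \<infinity>"
    by (simp add: AE_all_countable)
  then obtain N where N: "{\<omega> \<in> space M. \<not> (\<forall>m::nat. life_time \<tau> (cball 0 (real m)) \<omega> = \<infinity>)} \<subseteq> N"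
    "emeasure M N = 0" "N \<in> sets M" by (rule AE_E)
  show "strongly_complete M \<tau>"
    unfolding strongly_complete_def
  proof (intro bexI conjI ballI allI)
    show "space M - N \<in> sets M" using N by auto
    show "measure M (space M - N) = 1" using N prob_compl[of N]
      by (simp add: emeasure_eq_measure)
    fix \<omega> and x :: 'a assume w: "\<omega> \<in> space M - N"
    hence all: "life_time \<tau> (cball 0 (real m)) \<omega> = \<infinity>" for m using N(1) by auto
    obtain m :: nat where "norm x \<le> real m" using real_arch_simple by blast
    hence "x \<in> cball 0 (real m)" by simp
    hence "life_time \<tau> (cball 0 (real m)) \<omega> \<le> \<tau> x \<omega>" unfolding life_time_def by (rule INF_lower)
    thus "\<tau> x \<omega> = \<infinity>" using all[of m] by simp
  qed
next
  fix K a b T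
  assume H: "compact K \<and> (\<forall>n\<ge>1. 0 \<le> a n \<and> 0 \<le> b n) \<and>
        summable (\<lambda>n. a (Suc n)) \<and> summable (\<lambda>n. b (Suc n)) \<and>
        (\<forall>n\<ge>1. T n \<in> borel_measurable M \<and> (\<forall>\<omega>\<in>space M. 0 \<le> T n \<omega>)) \<and>
        (\<forall>\<omega>\<in>space M. life_time \<tau> K \<omega> \<le> (\<Sum>j. ereal (T (Suc j) \<omega>))) \<and>
        (\<forall>n\<ge>1. measure M {\<omega>\<in>space M. a n \<le> T n \<omega>} \<le> b n)"
  thus "AE \<omega> in M. life_time \<tau> K \<omega> < \<infinity>"
    by (intro part3[OF P, of a b T]) auto
qed

end
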